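(* Let $\mathrm{SU}(2)$ be the group of complex unitary $2\times 2$ matrices of determinant $1$. For $A,B,C\in\mathrm{SU}(2)$, the spectral curve of the triple $(A,B,C)$ is the curve in the complex projective plane with homogeneous coordinates $(\lambda:\mu:\nu)$ given by $\det(\lambda A+\mu B+\nu C)=0$; every such curve has the form $$\lambda^2+\mu^2+\nu^2+2p\,\lambda\mu+2q\,\lambda\nu+2r\,\mu\nu=0$$ for some real $p,q,r$. A curve of this form (with $p,q,r\in\mathbb{R}$) is the spectral curve of some triple $(A,B,C)\in\mathrm{SU}(2)^3$ if and only if $(p,q,r)$ lies in the body $$\Delta=\{(p,q,r)\in\mathbb{R}^3:\ -1\le p\le 1,\ -1\le q\le 1,\ -1\le r\le 1,\ 1-p^2-q^2-r^2+2pqr\ge 0\}.$$ *)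

theory Defs
  imports "HOL-Analysis.Analysis"
begin

definition conj_transpose :: "complex^'n^'m \<Rightarrow> complex^'m^'n" where
  "conj_transpose A = (\<chi> i j. cnj (A $ j $ i))"

definition SU2 :: "(complex^2^2) set" where
  "SU2 = {A. A ** conj_transpose A = mat 1 \<and> conj_transpose A ** A = mat 1 \<and> det A = 1}"

definition Delta :: "(real \<times> real \<times> real) set" where
  "Delta = {(p, q, r). -1 \<le> p \<and> p \<le> 1 \<and> -1 \<le> q \<and> q \<le> 1 \<and> -1 \<le> r \<and> r \<le> 1
                      \<and> 1 - p^2 - q^2 - r^2 + 2*p*q*r \<ge> 0}"

definition lincomb3 ::
  "complex \<Rightarrow> complex \<Rightarrow> complex \<Rightarrow> complex^2^2 \<Rightarrow> complex^2^2 \<Rightarrow> complex^2^2 \<Rightarrow> complex^2^2" where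
  "lincomb3 l m n A B C = (\<chi> i j. l * A $ i $ j + m * B $ i $ j + n * C $ i $ j)"

text \<open>The spectral curve det(l A + m B + n C) = 0 of the triple (A,B,C) is the curve
  l^2 + m^2 + n^2 + 2p lm + 2q ln + 2r mn = 0, i.e. the determinant equals this quadratic form
  identically (both are normalised by the coefficient 1 of l^2, since det A = 1).\<close>
definition has_spectral_curve ::
  "complex^2^2 \<Rightarrow> complex^2^2 \<Rightarrow> complex^2^2 \<Rightarrow> real \<Rightarrow> real \<Rightarrow> real \<Rightarrow> bool" where
  "has_spectral_curve A B C p q r \<longleftrightarrow>
     (\<forall>l m n :: complex. det (lincomb3 l m n A B C) =
        l^2 + m^2 + n^2 + 2 * of_real p * l * m + 2 * of_real q * l * n + 2 * of_real r * m * n)"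

end

theory Submission
  imports Defs
begin

lemma gram_delta:
  fixes u v w :: "'a::real_inner"
  assumes "inner u u = 1" "inner v v = 1" "inner w w = 1"
  shows "(inner u v, inner u w, inner v w) \<in> Delta"
proof -
  define p where "p = inner u v"
  define q where "q = inner u w"
  define r where "r = inner v w"
  have p2: "p^2 \<le> 1" using Cauchy_Schwarz_ineq[of u v] assms unfolding p_def by simp
  have q2: "q^2 \<le> 1" using Cauchy_Schwarz_ineq[of u w] assms unfolding q_def by simp
  have r2: "r^2 \<le> 1" using Cauchy_Schwarz_ineq[of v w] assms unfolding r_def by simp
  have "p \<ge> -1 \<and> p \<le> 1" using p2 by (metis abs_le_square_iff abs_le_iff abs_one one_power2 minus_le_iff)
  moreover have "q \<ge> -1 \<and> q \<le> 1" using q2 by (metis abs_le_square_iff abs_le_iff abs_one one_power2 minus_le_iff)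
  moreover have "r \<ge> -1 \<and> r \<le> 1" using r2 by (metis abs_le_square_iff abs_le_iff abs_one one_power2 minus_le_iff)
  moreover have "(inner (v - p *\<^sub>R u) (w - q *\<^sub>R u))^2 \<le>
       inner (v - p *\<^sub>R u) (v - p *\<^sub>R u) * inner (w - q *\<^sub>R u) (w - q *\<^sub>R u)"
    by (rule Cauchy_Schwarz_ineq)
  hence "(r - p*q)^2 \<le> (1 - p^2) * (1 - q^2)"
    using assms unfolding p_def q_def r_def
    by (simp add: inner_diff_left inner_diff_right inner_commute power2_eq_square algebra_simps)
  hence "1 - p^2 - q^2 - r^2 + 2*p*q*r \<ge> 0"
    by (simp add: power2_eq_square algebra_simps)
  ultimately show ?thesis unfolding Delta_def p_def q_def r_def by auto
qed

definition qm :: "complex \<Rightarrow> complex \<Rightarrow> complex^2^2" where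
  "qm a b = (\<chi> i j. if i = 1 then (if j = 1 then a else b) else (if j = 1 then - cnj b else cnj a))"

lemma qm_nth [simp]:
  "qm a b $ 1 $ 1 = a" "qm a b $ 1 $ 2 = b" "qm a b $ 2 $ 1 = - cnj b" "qm a b $ 2 $ 2 = cnj a"
  by (simp_all add: qm_def)

lemma mat_eq2: "(X::'a^2^2) = Y \<longleftrightarrow> X$1$1 = Y$1$1 \<and> X$1$2 = Y$1$2 \<and> X$2$1 = Y$2$1 \<and> X$2$2 = Y$2$2"
  by (auto simp: vec_eq_iff forall_2)

lemma su2_form:
  assumes "A \<in> SU2"
  shows "\<exists>a b. A = qm a b \<and> a * cnj a + b * cnj b = 1"
proof -
  define a where "a = A$1$1"
  define b where "b = A$1$2"
  define c where "c = A$2$1"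
  define d where "d = A$2$2"
  have M: "A ** conj_transpose A = mat 1" and D: "det A = 1" using assms by (auto simp: SU2_def)
  have e1: "a * cnj a + b * cnj b = 1"
    using arg_cong[OF M, of "\<lambda>X. X$1$1"]
    by (simp add: matrix_matrix_mult_def sum_2 conj_transpose_def mat_def a_def b_def)
  have e2: "a * cnj c + b * cnj d = 0"
    using arg_cong[OF M, of "\<lambda>X. X$1$2"]
    by (simp add: matrix_matrix_mult_def sum_2 conj_transpose_def mat_def a_def b_def c_def d_def)
  have e2': "cnj a * c + cnj b * d = 0"
    using arg_cong[OF e2, of cnj] by simp
  have e3: "a * d - b * c = 1" using D by (simp add: det_2 a_def b_def c_def d_def)
  have "d = cnj a" using e1 e2' e3 by algebra
  moreover have "c = - cnj b" using e1 e2' e3 by algebra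
  ultimately have "A = qm a b" by (simp add: mat_eq2 a_def b_def c_def d_def)
  thus ?thesis using e1 by blast
qed

lemma qm_SU2:
  assumes "a * cnj a + b * cnj b = 1"
  shows "qm a b \<in> SU2"
proof -
  have "qm a b ** conj_transpose (qm a b) = mat 1"
    using assms by (simp add: mat_eq2 matrix_matrix_mult_def sum_2 conj_transpose_def mat_def algebra_simps)
  moreover have "conj_transpose (qm a b) ** qm a b = mat 1"
    using assms by (simp add: mat_eq2 matrix_matrix_mult_def sum_2 conj_transpose_def mat_def algebra_simps)
  moreover have "det (qm a b) = 1" using assms by (simp add: det_2 algebra_simps)
  ultimately show ?thesis by (simp add: SU2_def)
qed

definition ip :: "complex \<Rightarrow> complex \<Rightarrow> complex \<Rightarrow> complex \<Rightarrow> real" where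
  "ip a1 b1 a2 b2 = Re (a1 * cnj a2 + b1 * cnj b2)"

lemma ip_inner: "ip a1 b1 a2 b2 = inner (a1, b1) (a2, b2)"
  by (simp add: ip_def inner_complex_def inner_Pair)

lemma qm_curve:
  assumes "a1 * cnj a1 + b1 * cnj b1 = 1" "a2 * cnj a2 + b2 * cnj b2 = 1" "a3 * cnj a3 + b3 * cnj b3 = 1"
  shows "has_spectral_curve (qm a1 b1) (qm a2 b2) (qm a3 b3) (ip a1 b1 a2 b2) (ip a1 b1 a3 b3) (ip a2 b2 a3 b3)"
  unfolding has_spectral_curve_def
proof (intro allI)
  fix l m n :: complex
  have h: "\<And>x y u v. x * cnj u + y * cnj v + (u * cnj x + v * cnj y) = 2 * of_real (ip x y u v)"
  proof -
    fix x y u v :: complex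
    have "x * cnj u + y * cnj v + (u * cnj x + v * cnj y) = (x * cnj u + y * cnj v) + cnj (x * cnj u + y * cnj v)"
      by simp
    also have "\<dots> = 2 * of_real (ip x y u v)" unfolding ip_def complex_add_cnj by (simp only: of_real_mult of_real_numeral)
    finally show "x * cnj u + y * cnj v + (u * cnj x + v * cnj y) = 2 * of_real (ip x y u v)" .
  qed
  note h1 = h[where x=a1 and y=b1 and u=a2 and v=b2] and h2 = h[where x=a1 and y=b1 and u=a3 and v=b3]
    and h3 = h[where x=a2 and y=b2 and u=a3 and v=b3]
  show "det (lincomb3 l m n (qm a1 b1) (qm a2 b2) (qm a3 b3)) =
    l\<^sup>2 + m\<^sup>2 + n\<^sup>2 + 2 * complex_of_real (ip a1 b1 a2 b2) * l * m +
    2 * complex_of_real (ip a1 b1 a3 b3) * l * n + 2 * complex_of_real (ip a2 b2 a3 b3) * m * n"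
  proof -
    have "det (lincomb3 l m n (qm a1 b1) (qm a2 b2) (qm a3 b3)) =
      l^2 * (a1 * cnj a1 + b1 * cnj b1) + m^2 * (a2 * cnj a2 + b2 * cnj b2) + n^2 * (a3 * cnj a3 + b3 * cnj b3)
      + l * m * (a1 * cnj a2 + b1 * cnj b2 + (a2 * cnj a1 + b2 * cnj b1))
      + l * n * (a1 * cnj a3 + b1 * cnj b3 + (a3 * cnj a1 + b3 * cnj b1))
      + m * n * (a2 * cnj a3 + b2 * cnj b3 + (a3 * cnj a2 + b3 * cnj b2))"
      by (simp add: det_2 lincomb3_def) (simp add: algebra_simps power2_eq_square)
    also have "\<dots> = l\<^sup>2 + m\<^sup>2 + n\<^sup>2 + 2 * complex_of_real (ip a1 b1 a2 b2) * l * m +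
    2 * complex_of_real (ip a1 b1 a3 b3) * l * n + 2 * complex_of_real (ip a2 b2 a3 b3) * m * n"
      unfolding assms h1 h2 h3 by (simp add: algebra_simps)
    finally show ?thesis .
  qed
qed

lemma unit_inner: "a * cnj a + b * cnj b = 1 \<Longrightarrow> inner (a, b) (a, b) = 1"
  by (metis ip_def ip_inner one_complex.sel(1))

lemma unit_Complex: "x^2 + y^2 = 1 \<Longrightarrow> Complex x y * cnj (Complex x y) = 1"
  by (simp add: complex_eq_iff power2_eq_square)

lemma construct:
  assumes "(p, q, r) \<in> Delta"
  shows "\<exists>A\<in>SU2. \<exists>B\<in>SU2. \<exists>C\<in>SU2. has_spectral_curve A B C p q r"
proof -
  from assms have b: "-1 \<le> p" "p \<le> 1" "-1 \<le> q" "q \<le> 1" "-1 \<le> r" "r \<le> 1"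
    and D: "1 - p^2 - q^2 - r^2 + 2 * p*q * r \<ge> 0" by (auto simp: Delta_def)
  have p2: "p^2 \<le> 1" using b by (simp add: abs_square_le_1 abs_le_iff)
  have q2: "q^2 \<le> 1" using b by (simp add: abs_square_le_1 abs_le_iff)
  define spv where "spv = sqrt (1 - p^2)"
  have spv: "spv^2 = 1 - p^2" "spv \<ge> 0" using p2 by (auto simp: spv_def)
  define s where "s = (if p^2 = 1 then sqrt (1 - q^2) else (r - p * q) / spv)"
  have key: "(q^2 + s^2 \<le> 1) \<and> (p * q + spv * s = r)"
  proof (cases "p^2 = 1")
    case True
    hence "spv = 0" using spv by simp
    have pp: "\<And>x. p * (p * x) = x" using True by (metis mult.assoc power2_eq_square mult_1)
    have "(q - p * r)^2 \<le> 0" using D True by (simp add: power2_eq_square algebra_simps pp)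
    hence "(q - p * r)^2 = 0" by (meson antisym zero_le_power2)
    hence "q = p * r" by simp
    hence "p * q = r" using True by (simp add: power2_eq_square algebra_simps)
    moreover have "s^2 = 1 - q^2" using True q2 by (simp add: s_def)
    ultimately show ?thesis using \<open>spv = 0\<close> by simp
  next
    case False
    hence sppos: "spv > 0" using spv p2 by (smt (verit) zero_less_power2 power_zero_numeral)
    have "spv * s = r - p * q" using sppos by (simp add: s_def False)
    moreover have "(spv * s)^2 \<le> spv^2 * (1 - q^2)"
    proof -
      have "(r - p * q)^2 \<le> (1 - p^2) * (1 - q^2)" using D by (simp add: power2_eq_square algebra_simps)
      thus ?thesis using \<open>spv * s = r - p * q\<close> spv by simp
    qed
    hence "spv^2 * s^2 \<le> spv^2 * (1 - q^2)" by (simp add: power_mult_distrib)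
    hence "s^2 \<le> 1 - q^2" using sppos by (simp add: mult_le_cancel_left)
    ultimately show ?thesis by simp
  qed
  define t where "t = sqrt (1 - q^2 - s^2)"
  have t: "t^2 = 1 - q^2 - s^2" using key by (simp add: t_def)
  define a2 where "a2 = Complex p spv"
  define a3 where "a3 = Complex q s"
  define b3 where "b3 = complex_of_real t"
  have u1: "1 * cnj 1 + 0 * cnj 0 = (1::complex)" by simp
  have u2: "a2 * cnj a2 + 0 * cnj 0 = 1" using unit_Complex[of p spv] spv by (simp add: a2_def)
  have u3: "a3 * cnj a3 + b3 * cnj b3 = 1"
    using t by (simp add: a3_def b3_def complex_eq_iff power2_eq_square algebra_simps)
  have "ip 1 0 a2 0 = p" by (simp add: ip_def a2_def)
  moreover have "ip 1 0 a3 b3 = q" by (simp add: ip_def a3_def)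
  moreover have "ip a2 0 a3 b3 = r" using key by (simp add: ip_def a2_def a3_def)
  ultimately have "has_spectral_curve (qm 1 0) (qm a2 0) (qm a3 b3) p q r"
    using qm_curve[OF u1 u2 u3] by simp
  thus ?thesis using qm_SU2[OF u1] qm_SU2[OF u2] qm_SU2[OF u3] by blast
qed

lemma curve_unique:
  assumes "has_spectral_curve A B C p q r" "has_spectral_curve A B C p' q' r'"
  shows "p = p' \<and> q = q' \<and> r = r'"
proof -
  have e1: "(2::complex) + 2 * of_real p = 2 + 2 * of_real p'"
    using spec[OF spec[OF spec[OF assms(1)[unfolded has_spectral_curve_def], of 1], of 1], of 0]
      spec[OF spec[OF spec[OF assms(2)[unfolded has_spectral_curve_def], of 1], of 1], of 0]
    by simp
  have e2: "(2::complex) + 2 * of_real q = 2 + 2 * of_real q'"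
    using spec[OF spec[OF spec[OF assms(1)[unfolded has_spectral_curve_def], of 1], of 0], of 1]
      spec[OF spec[OF spec[OF assms(2)[unfolded has_spectral_curve_def], of 1], of 0], of 1]
    by simp
  have e3: "(2::complex) + 2 * of_real r = 2 + 2 * of_real r'"
    using spec[OF spec[OF spec[OF assms(1)[unfolded has_spectral_curve_def], of 0], of 1], of 1]
      spec[OF spec[OF spec[OF assms(2)[unfolded has_spectral_curve_def], of 0], of 1], of 1]
    by simp
  show ?thesis using e1 e2 e3 by simp
qed

theorem proposition1p1:
  shows "(\<forall>A\<in>SU2. \<forall>B\<in>SU2. \<forall>C\<in>SU2. \<exists>p q r. has_spectral_curve A B C p q r) \<and>
         (\<forall>p q r. (\<exists>A\<in>SU2. \<exists>B\<in>SU2. \<exists>C\<in>SU2. has_spectral_curve A B C p q r)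
                   \<longleftrightarrow> (p, q, r) \<in> Delta)"
proof (intro conjI ballI allI iffI)
  fix A B C assume "A \<in> SU2" "B \<in> SU2" "C \<in> SU2"
  then obtain a1 b1 a2 b2 a3 b3 where "A = qm a1 b1" "a1 * cnj a1 + b1 * cnj b1 = 1"
    "B = qm a2 b2" "a2 * cnj a2 + b2 * cnj b2 = 1" "C = qm a3 b3" "a3 * cnj a3 + b3 * cnj b3 = 1"
    using su2_form by metis
  thus "\<exists>p q r. has_spectral_curve A B C p q r" using qm_curve by blast
next
  fix p q r assume "(p, q, r) \<in> Delta"
  thus "\<exists>A\<in>SU2. \<exists>B\<in>SU2. \<exists>C\<in>SU2. has_spectral_curve A B C p q r" by (rule construct)
next
  fix p q r assume "\<exists>A\<in>SU2. \<exists>B\<in>SU2. \<exists>C\<in>SU2. has_spectral_curve A B C p q r"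
  then obtain A B C where "A \<in> SU2" "B \<in> SU2" "C \<in> SU2" and hc: "has_spectral_curve A B C p q r"
    by blast
  then obtain a1 b1 a2 b2 a3 b3 where E: "A = qm a1 b1" and u1: "a1 * cnj a1 + b1 * cnj b1 = 1" and
    "B = qm a2 b2" and u2: "a2 * cnj a2 + b2 * cnj b2 = 1" and "C = qm a3 b3" and u3: "a3 * cnj a3 + b3 * cnj b3 = 1"
    using su2_form by metis
  hence "has_spectral_curve A B C (ip a1 b1 a2 b2) (ip a1 b1 a3 b3) (ip a2 b2 a3 b3)"
    using qm_curve by blast
  hence "p = ip a1 b1 a2 b2 \<and> q = ip a1 b1 a3 b3 \<and> r = ip a2 b2 a3 b3"
    using curve_unique[OF hc] by blast
  thus "(p, q, r) \<in> Delta"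
    using gram_delta[OF unit_inner[OF u1] unit_inner[OF u2] unit_inner[OF u3]] by (simp add: ip_inner)
qed

end
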